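(* Let $P=(Q,I,M,\Delta)$ be a broadcast protocol and consider a run of the saturation algorithm on $P$, with $S_0=I,S_1,\dots,S_m$ the values of $S$ after each iteration and $c_0=|I|,c_1,\dots,c_m$ the corresponding values of $c$. For every $0\le i\le m$ there exist a configuration $\gamma=(V,E,L)$ and a lossy execution $\rho$ from an initial configuration to $\gamma$ such that: $\rho$ has exactly $c_i$ nodes; every node performs at most $i$ broadcasts (lost or successful) and at most $1$ successful broadcast along $\rho$; and there is a family of pairwise distinct nodes $(v^{main}_q)_{q\in S_i}$ (the main nodes) such that for every $q\in S_i$, $L(v^{main}_q)=q$, $v^{main}_q$ performs no successful broadcast along $\rho$, and every neighbour of $v^{main}_q$ in $E$ is not a main node. (Nodes that are not main nodes are considered irrelevant and their labels are unconstrained.)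
   Context: A broadcast protocol is a tuple $P=(Q,I,M,\Delta)$ where $Q$ is a finite set of states, $I\subseteq Q$ initial states, $M$ a finite message alphabet and $\Delta\subseteq Q\times\{!!m,\ ??m \mid m\in M\}\times Q$ ($!!m$ = broadcast, $??m$ = reception). Protocols are complete for receptions: for every $q$, $m$ there is $q'$ with $(q,??m,q')\in\Delta$. A configuration is a finite undirected graph $\gamma=(V,E,L)$, $E$ symmetric irreflexive, $L:V\to Q$; $\gamma$ is initial if $L(V)\subseteq I$. A lossy step goes from $\gamma=(V,E,L)$ to $\gamma'=(V,E,L')$ (same nodes and edges) if there exist a node $v$ (which broadcasts) and $m\in M$ with $(L(v),!!m,L'(v))\in\Delta$ and either (a) $L'(v')=L(v')$ for all $v'\neq v$ (lost broadcast), or (b) for every $v'\neq v$: if $v'$ is a neighbour of $v$ then $(L(v'),??m,L'(v'))\in\Delta$, otherwise $L'(v')=L(v')$ (successful broadcast). A lossy execution is a sequence of configurations starting from an initial one with consecutive lossy steps; its number of nodes is $|V|$. The saturation algorithm: start with $S:=I$, $c:=|I|$; repeat: if there is $(q_1,!!m,q_2)\in\Delta$ with $q_1\in S$, $q_2\notin S$, add $q_2$ to $S$ and $c:=c+1$; else if there are $(q_1,!!m,q_2),(q_1',??m,q_2')\in\Delta$ with $q_1,q_2,q_1'\in S$, $q_2'\notin S$, add $q_2'$ and $c:=c+2$; else stop and return $S$. *)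

theory Defs
  imports Main
begin

datatype 'm action = Bcast 'm | Recv 'm

definition msg_of :: "'m action \<Rightarrow> 'm" where
  "msg_of a = (case a of Bcast m \<Rightarrow> m | Recv m \<Rightarrow> m)"

definition broadcast_protocol ::
  "'q set \<Rightarrow> 'q set \<Rightarrow> 'm set \<Rightarrow> ('q \<times> 'm action \<times> 'q) set \<Rightarrow> bool" where
  "broadcast_protocol Q I M Delta \<longleftrightarrow>
     finite Q \<and> I \<subseteq> Q \<and> finite M \<and>
     (\<forall>(q, a, q') \<in> Delta. q \<in> Q \<and> q' \<in> Q \<and> msg_of a \<in> M) \<and>
     (\<forall>q \<in> Q. \<forall>m \<in> M. \<exists>q'. (q, Recv m, q') \<in> Delta)"

definition graph :: "'v set \<Rightarrow> ('v \<times> 'v) set \<Rightarrow> bool" where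
  "graph V E \<longleftrightarrow> finite V \<and> E \<subseteq> V \<times> V \<and> sym E \<and> irrefl E"

text \<open>Labels of nodes outside V are kept unchanged (they are irrelevant).\<close>
definition lossy_step ::
  "('q \<times> 'm action \<times> 'q) set \<Rightarrow> 'v set \<Rightarrow> ('v \<times> 'v) set \<Rightarrow>
   ('v \<Rightarrow> 'q) \<Rightarrow> 'v \<Rightarrow> 'm \<Rightarrow> bool \<Rightarrow> ('v \<Rightarrow> 'q) \<Rightarrow> bool" where
  "lossy_step Delta V E L v m b L' \<longleftrightarrow>
     v \<in> V \<and> (L v, Bcast m, L' v) \<in> Delta \<and>
     (if b then (\<forall>v'. v' \<noteq> v \<longrightarrow>
                   (if (v, v') \<in> E then (L v', Recv m, L' v') \<in> Delta else L' v' = L v'))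
      else (\<forall>v'. v' \<noteq> v \<longrightarrow> L' v' = L v'))"

text \<open>An execution is a list of steps (broadcaster, message, successful?, new labelling).\<close>
type_synonym ('v, 'm, 'q) step = "'v \<times> 'm \<times> bool \<times> ('v \<Rightarrow> 'q)"

fun lossy_run ::
  "('q \<times> 'm action \<times> 'q) set \<Rightarrow> 'v set \<Rightarrow> ('v \<times> 'v) set \<Rightarrow>
   ('v \<Rightarrow> 'q) \<Rightarrow> ('v, 'm, 'q) step list \<Rightarrow> ('v \<Rightarrow> 'q) \<Rightarrow> bool" where
  "lossy_run Delta V E L [] L' \<longleftrightarrow> L' = L"
| "lossy_run Delta V E L ((v, m, b, L1) # rest) L' \<longleftrightarrow>
     lossy_step Delta V E L v m b L1 \<and> lossy_run Delta V E L1 rest L'"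

definition lossy_execution ::
  "'q set \<Rightarrow> ('q \<times> 'm action \<times> 'q) set \<Rightarrow> 'v set \<Rightarrow> ('v \<times> 'v) set \<Rightarrow>
   ('v \<Rightarrow> 'q) \<Rightarrow> ('v, 'm, 'q) step list \<Rightarrow> ('v \<Rightarrow> 'q) \<Rightarrow> bool" where
  "lossy_execution I Delta V E L0 steps L \<longleftrightarrow>
     graph V E \<and> L0 ` V \<subseteq> I \<and> lossy_run Delta V E L0 steps L"

definition num_broadcasts :: "('v, 'm, 'q) step list \<Rightarrow> 'v \<Rightarrow> nat" where
  "num_broadcasts steps v = length (filter (\<lambda>s. fst s = v) steps)"

definition num_successful :: "('v, 'm, 'q) step list \<Rightarrow> 'v \<Rightarrow> nat" where
  "num_successful steps v = length (filter (\<lambda>s. fst s = v \<and> fst (snd (snd s))) steps)"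

definition rule1_applicable :: "('q \<times> 'm action \<times> 'q) set \<Rightarrow> 'q set \<Rightarrow> bool" where
  "rule1_applicable Delta S \<longleftrightarrow> (\<exists>q1 m q2. (q1, Bcast m, q2) \<in> Delta \<and> q1 \<in> S \<and> q2 \<notin> S)"

definition rule2_applicable :: "('q \<times> 'm action \<times> 'q) set \<Rightarrow> 'q set \<Rightarrow> bool" where
  "rule2_applicable Delta S \<longleftrightarrow> (\<exists>q1 m q2 q1' q2'. (q1, Bcast m, q2) \<in> Delta \<and>
      (q1', Recv m, q2') \<in> Delta \<and> q1 \<in> S \<and> q2 \<in> S \<and> q1' \<in> S \<and> q2' \<notin> S)"

definition sat_step ::
  "('q \<times> 'm action \<times> 'q) set \<Rightarrow> 'q set \<Rightarrow> nat \<Rightarrow> 'q set \<Rightarrow> nat \<Rightarrow> bool" where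
  "sat_step Delta S c S' c' \<longleftrightarrow>
     (\<exists>q1 m q2. (q1, Bcast m, q2) \<in> Delta \<and> q1 \<in> S \<and> q2 \<notin> S \<and>
                S' = insert q2 S \<and> c' = c + 1)
   \<or> (\<not> rule1_applicable Delta S \<and>
      (\<exists>q1 m q2 q1' q2'. (q1, Bcast m, q2) \<in> Delta \<and> (q1', Recv m, q2') \<in> Delta \<and>
          q1 \<in> S \<and> q2 \<in> S \<and> q1' \<in> S \<and> q2' \<notin> S \<and>
          S' = insert q2' S \<and> c' = c + 2))"

definition saturation_run ::
  "'q set \<Rightarrow> ('q \<times> 'm action \<times> 'q) set \<Rightarrow> (nat \<Rightarrow> 'q set) \<Rightarrow> (nat \<Rightarrow> nat) \<Rightarrow> nat \<Rightarrow> bool" where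
  "saturation_run I Delta S c m \<longleftrightarrow>
     S 0 = I \<and> c 0 = card I \<and>
     (\<forall>i < m. sat_step Delta (S i) (c i) (S (Suc i)) (c (Suc i))) \<and>
     \<not> rule1_applicable Delta (S m) \<and> \<not> rule2_applicable Delta (S m)"

end

theory Submission
  imports Defs
begin


lemma nb_Nil[simp]: "num_broadcasts [] x = 0" by (simp add: num_broadcasts_def)
lemma ns_Nil[simp]: "num_successful [] x = 0" by (simp add: num_successful_def)
lemma nb_Cons[simp]: "num_broadcasts ((v,m,b,L1)#rest) x = (if v = x then 1 else 0) + num_broadcasts rest x"
  by (simp add: num_broadcasts_def)
lemma ns_Cons[simp]: "num_successful ((v,m,b,L1)#rest) x = (if v = x \<and> b then 1 else 0) + num_successful rest x"
  by (simp add: num_successful_def)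
lemma nb_append[simp]: "num_broadcasts (xs @ ys) x = num_broadcasts xs x + num_broadcasts ys x"
  by (simp add: num_broadcasts_def)
lemma ns_append[simp]: "num_successful (xs @ ys) x = num_successful xs x + num_successful ys x"
  by (simp add: num_successful_def)

lemma run_append: "lossy_run D V E L (xs @ ys) L'' \<longleftrightarrow> (\<exists>L'. lossy_run D V E L xs L' \<and> lossy_run D V E L' ys L'')"
proof (induction xs arbitrary: L)
  case Nil then show ?case by simp
next
  case (Cons a xs) then show ?case by (cases a) auto
qed

lemma run_in_V: "lossy_run D V E L steps L' \<Longrightarrow> \<forall>s\<in>set steps. fst s \<in> V"
  by (induction D V E L steps L' rule: lossy_run.induct) (auto simp: lossy_step_def)

lemma run_Q: "lossy_run D V E L steps L' \<Longrightarrow> \<forall>(q,a,q')\<in>D. q' \<in> Q \<Longrightarrow> L ` V \<subseteq> Q \<Longrightarrow> L' ` V \<subseteq> Q"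
proof (induction D V E L steps L' rule: lossy_run.induct)
  case (1 Delta V E L L')
  then show ?case by simp
next
  case (2 Delta V E L v m b L1 rest L')
  have "L1 ` V \<subseteq> Q"
  proof
    fix y assume "y \<in> L1 ` V"
    then obtain x where x: "x \<in> V" "y = L1 x" by auto
    have st: "lossy_step Delta V E L v m b L1" using 2(2) by simp
    have LxQ: "L x \<in> Q" using 2(4) x by auto
    have D: "\<And>q a q'. (q,a,q') \<in> Delta \<Longrightarrow> q' \<in> Q" using 2(3) by auto
    show "y \<in> Q"
    proof (cases "x = v")
      case True then show ?thesis using st x D by (auto simp: lossy_step_def)
    next
      case False
      then show ?thesis using st x D LxQ by (auto simp: lossy_step_def split: if_splits)
    qed
  qed
  then show ?case using 2 by simp
qed

lemma add_edge: "lossy_run D V E L steps L' \<Longrightarrow> num_successful steps a = 0 \<Longrightarrow> num_successful steps b = 0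
  \<Longrightarrow> lossy_run D V (E \<union> {(a,b),(b,a)}) L steps L'"
proof (induction D V E L steps L' rule: lossy_run.induct)
  case (1 Delta V E L L')
  then show ?case by simp
next
  case (2 Delta V E L v m bb L1 rest L')
  then show ?case by (auto simp: lossy_step_def split: if_splits)
qed

definition cpE :: "('v \<times> 'v) set \<Rightarrow> 'v \<Rightarrow> 'v \<Rightarrow> ('v \<times> 'v) set" where
  "cpE E u w = E \<union> {(w,x)| x. (u,x)\<in>E} \<union> {(x,w)| x. (u,x)\<in>E}"

fun cp :: "'v \<Rightarrow> 'v \<Rightarrow> ('v \<Rightarrow> 'q) \<Rightarrow> ('v,'m,'q) step list \<Rightarrow> ('v,'m,'q) step list" where
  "cp u w L [] = []"
| "cp u w L ((v,m,b,L1)#rest) = (if v = u then [(u,m,b,L1(w:=L u)), (w,m,b,L1(w:=L1 u))]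
     else [(v,m,b,L1(w:=L1 u))]) @ cp u w L1 rest"

lemma cp_run: "lossy_run D V E L steps L' \<Longrightarrow> num_successful steps u = 0 \<Longrightarrow> u \<in> V \<Longrightarrow> w \<notin> V
  \<Longrightarrow> sym E \<Longrightarrow> E \<subseteq> V \<times> V \<Longrightarrow> lossy_run D (insert w V) (cpE E u w) (L(w:=L u)) (cp u w L steps) (L'(w:=L' u))"
proof (induction D V E L steps L' rule: lossy_run.induct)
  case (1 Delta V E L L')
  then show ?case by simp
next
  case (2 Delta V E L v m b L1 rest L')
  have IH: "lossy_run Delta (insert w V) (cpE E u w) (L1(w:=L1 u)) (cp u w L1 rest) (L'(w:=L' u))"
    by (rule 2(1)) (use 2(2-) in auto)
  have st: "lossy_step Delta V E L v m b L1" using 2 by simp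
  have vV: "v \<in> V" using st by (simp add: lossy_step_def)
  show ?case
  proof (cases "v = u")
    case True
    then have nb: "\<not> b" using 2(3) by (simp split: if_splits)
    have s1: "lossy_step Delta (insert w V) (cpE E u w) (L(w:=L u)) u m b (L1(w:=L u))"
      using st nb True 2(5,6) by (auto simp: lossy_step_def)
    have s2: "lossy_step Delta (insert w V) (cpE E u w) (L1(w:=L u)) w m b (L1(w:=L1 u))"
      using st nb True 2(5,6) by (auto simp: lossy_step_def)
    show ?thesis using True s1 s2 IH by (simp add: fun_upd_def)
  next
    case False
    have s1: "lossy_step Delta (insert w V) (cpE E u w) (L(w:=L u)) v m b (L1(w:=L1 u))"
    proof (cases b)
      case True
      show ?thesis unfolding lossy_step_def
      proof (intro conjI)
        show "v \<in> insert w V" using vV by simp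
        show "((L(w := L u)) v, Bcast m, (L1(w := L1 u)) v) \<in> Delta" using st vV 2(5) by (auto simp: lossy_step_def)
        show "if b then \<forall>v'. v' \<noteq> v \<longrightarrow> (if (v, v') \<in> cpE E u w then ((L(w := L u)) v', Recv m, (L1(w := L1 u)) v') \<in> Delta
                 else (L1(w := L1 u)) v' = (L(w := L u)) v')
              else \<forall>v'. v' \<noteq> v \<longrightarrow> (L1(w := L1 u)) v' = (L(w := L u)) v'"
          using True st vV 2(5,6,7) False unfolding lossy_step_def cpE_def
          by (auto split: if_splits dest: symD)
      qed
    next
      case nb: False
      show ?thesis using st vV 2(5) False nb by (auto simp: lossy_step_def)
    qed
    show ?thesis using False s1 IH by (simp add: fun_upd_def)
  qed
qed

lemma cp_nb: "\<forall>s\<in>set steps. fst s \<noteq> w \<Longrightarrow> u \<noteq> w \<Longrightarrow>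
  num_broadcasts (cp u w L steps) x = (if x = w then num_broadcasts steps u else num_broadcasts steps x)"
proof (induction u w L steps rule: cp.induct)
  case (1 u w L)
  then show ?case by simp
next
  case (2 u w L v m b L1 rest)
  then show ?case by auto
qed

lemma cp_ns: "\<forall>s\<in>set steps. fst s \<noteq> w \<Longrightarrow> u \<noteq> w \<Longrightarrow>
  num_successful (cp u w L steps) x = (if x = w then num_successful steps u else num_successful steps x)"
proof (induction u w L steps rule: cp.induct)
  case (1 u w L)
  then show ?case by simp
next
  case (2 u w L v m b L1 rest)
  then show ?case by auto
qed

lemma cpE_iff: "(x,y) \<in> cpE E u w \<longleftrightarrow> (x,y)\<in>E \<or> (x = w \<and> (u,y)\<in>E) \<or> (y = w \<and> (u,x) \<in> E)"
  by (auto simp: cpE_def)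

lemma cpE_graph: "graph V E \<Longrightarrow> u \<in> V \<Longrightarrow> w \<notin> V \<Longrightarrow> graph (insert w V) (cpE E u w)"
  unfolding graph_def sym_def irrefl_def by (auto simp: cpE_iff)

lemma main:
  fixes Q I :: "'q set" and M :: "'m set" and Delta :: "('q \<times> 'm action \<times> 'q) set"
    and S :: "nat \<Rightarrow> 'q set" and c :: "nat \<Rightarrow> nat" and m i :: nat
  assumes bp: "broadcast_protocol Q I M Delta"
    and sr: "saturation_run I Delta S c m"
  shows "i \<le> m \<Longrightarrow> \<exists>(V :: nat set) E L0 L (steps :: (nat, 'm, 'q) step list) (vmain :: 'q \<Rightarrow> nat).
           lossy_execution I Delta V E L0 steps L \<and>
           card V = c i \<and>
           (\<forall>v \<in> V. num_broadcasts steps v \<le> i \<and> num_successful steps v \<le> 1) \<and>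
           inj_on vmain (S i) \<and>
           (\<forall>q \<in> S i. vmain q \<in> V \<and> L (vmain q) = q \<and> num_successful steps (vmain q) = 0 \<and>
              (\<forall>q' \<in> S i. (vmain q, vmain q') \<notin> E))"
proof (induction i)
  case 0
  have finI: "finite I" using bp unfolding broadcast_protocol_def by (auto intro: finite_subset)
  obtain h where h: "bij_betw h {0..<card I} I" using ex_bij_betw_nat_finite[OF finI] by blast
  define vm where "vm = the_inv_into {0..<card I} h"
  have S0: "S 0 = I" "c 0 = card I" using sr by (auto simp: saturation_run_def)
  have inj: "inj_on h {0..<card I}" and im: "h ` {0..<card I} = I" using h by (auto simp: bij_betw_def)
  have "lossy_execution I Delta {0..<card I} {} h [] h"
    unfolding lossy_execution_def graph_def sym_def irrefl_def using im by auto
  moreover have "inj_on vm (S 0)" unfolding vm_def S0 using inj_on_the_inv_into[OF inj] im by simp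
  moreover have "\<forall>q \<in> S 0. vm q \<in> {0..<card I} \<and> h (vm q) = q"
  proof
    fix q assume "q \<in> S 0"
    then have qI: "q \<in> I" using S0 by simp
    have "the_inv_into {0..<card I} h q \<in> {0..<card I}" using the_inv_into_into[OF inj _ subset_refl] im qI by blast
    moreover have "h (the_inv_into {0..<card I} h q) = q" using f_the_inv_into_f_bij_betw[OF h] qI by blast
    ultimately show "vm q \<in> {0..<card I} \<and> h (vm q) = q" unfolding vm_def by blast
  qed
  ultimately show ?case using S0 by (intro exI[of _ "{0..<card I}"] exI[of _ "{}"] exI[of _ h] exI[of _ h]
     exI[of _ "[]"] exI[of _ vm]) auto
next
  case (Suc i)
  have "i \<le> m" using Suc(2) by simp
  from Suc.IH[OF this] obtain V :: "nat set" and E L0 L steps and vmain :: "'q \<Rightarrow> nat" where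
    ex: "lossy_execution I Delta V E L0 steps L" and cV: "card V = c i" and
    cnt: "\<forall>v \<in> V. num_broadcasts steps v \<le> i \<and> num_successful steps v \<le> 1" and
    inj: "inj_on vmain (S i)" and
    mn: "\<forall>q \<in> S i. vmain q \<in> V \<and> L (vmain q) = q \<and> num_successful steps (vmain q) = 0 \<and>
              (\<forall>q' \<in> S i. (vmain q, vmain q') \<notin> E)" by (elim exE conjE) blast
  have ss: "sat_step Delta (S i) (c i) (S (Suc i)) (c (Suc i))" using sr Suc(2) by (auto simp: saturation_run_def)
  have gr: "graph V E" and L0I: "L0 ` V \<subseteq> I" and run: "lossy_run Delta V E L0 steps L"
    using ex by (auto simp: lossy_execution_def)
  have finV: "finite V" and EV: "E \<subseteq> V \<times> V" and symE: "sym E" and irrE: "irrefl E" using gr by (auto simp: graph_def)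
  have IQ: "I \<subseteq> Q" using bp by (auto simp: broadcast_protocol_def)
  have DQ: "\<forall>(q,a,q')\<in>Delta. q' \<in> Q" using bp by (auto simp: broadcast_protocol_def)
  have DM: "\<And>q a q'. (q,a,q') \<in> Delta \<Longrightarrow> msg_of a \<in> M" using bp by (auto simp: broadcast_protocol_def)
  have compl: "\<And>q mm. q \<in> Q \<Longrightarrow> mm \<in> M \<Longrightarrow> \<exists>q'. (q, Recv mm, q') \<in> Delta"
    using bp by (auto simp: broadcast_protocol_def)
  have inV: "\<forall>s\<in>set steps. fst s \<in> V" using run_in_V[OF run] .
  obtain w :: nat where w: "w \<notin> V" using ex_new_if_finite[OF infinite_UNIV_nat finV] by blast
  from ss show ?case unfolding sat_step_def
  proof (elim disjE exE conjE)
    fix q1 mm q2 assume t: "(q1, Bcast mm, q2) \<in> Delta" and q1: "q1 \<in> S i" and q2: "q2 \<notin> S i"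
      and Sn: "S (Suc i) = insert q2 (S i)" and cn: "c (Suc i) = c i + 1"
    define u where "u = vmain q1"
    have uV: "u \<in> V" and Lu: "L u = q1" and nsu: "num_successful steps u = 0"
      using mn q1 by (auto simp: u_def)
    have uw: "u \<noteq> w" using uV w by auto
    define steps' where "steps' = cp u w L0 steps @ [(w, mm, False, L(w := q2))]"
    define vm where "vm = vmain(q2 := w)"
    have r1: "lossy_run Delta (insert w V) (cpE E u w) (L0(w:=L0 u)) (cp u w L0 steps) (L(w:=L u))"
      using cp_run[OF run nsu uV w symE EV] .
    have r2: "lossy_step Delta (insert w V) (cpE E u w) (L(w:=L u)) w mm False (L(w := q2))"
      unfolding lossy_step_def using t Lu by auto
    have exe: "lossy_execution I Delta (insert w V) (cpE E u w) (L0(w:=L0 u)) steps' (L(w := q2))"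
      unfolding lossy_execution_def steps'_def run_append
      using cpE_graph[OF gr uV w] L0I uV r1 r2 by auto
    have nw: "\<forall>s\<in>set steps. fst s \<noteq> w" using inV w by auto
    have nb: "\<And>x. num_broadcasts steps' x = (if x = w then num_broadcasts steps u else num_broadcasts steps x) + (if x = w then 1 else 0)"
      unfolding steps'_def using cp_nb[OF nw uw] by simp
    have ns: "\<And>x. num_successful steps' x = (if x = w then num_successful steps u else num_successful steps x)"
      unfolding steps'_def using cp_ns[OF nw uw] by simp
    have vmV: "\<And>q. q \<in> S i \<Longrightarrow> vmain q \<noteq> w" using mn w by auto
    show ?thesis
    proof (intro exI conjI)
      show "lossy_execution I Delta (insert w V) (cpE E u w) (L0(w:=L0 u)) steps' (L(w := q2))" by (rule exe)
      show "card (insert w V) = c (Suc i)" using cV cn finV w by simp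
      show "\<forall>v\<in>insert w V. num_broadcasts steps' v \<le> Suc i \<and> num_successful steps' v \<le> 1"
        using cnt uV nsu by (auto simp: nb ns)
      show "inj_on vm (S (Suc i))" unfolding Sn vm_def using inj q2 vmV
        by (auto simp: inj_on_def)
      show "\<forall>q\<in>S (Suc i). vm q \<in> insert w V \<and> (L(w := q2)) (vm q) = q \<and> num_successful steps' (vm q) = 0 \<and>
          (\<forall>q'\<in>S (Suc i). (vm q, vm q') \<notin> cpE E u w)"
        unfolding Sn vm_def using mn q2 vmV nsu w EV irrE q1 u_def
        by (auto simp: ns cpE_iff irrefl_def)
    qed
  next
    fix q1 mm q2 q1' q2' assume t: "(q1, Bcast mm, q2) \<in> Delta" and t': "(q1', Recv mm, q2') \<in> Delta"
      and q1: "q1 \<in> S i" and q2: "q2 \<in> S i" and q1': "q1' \<in> S i" and q2': "q2' \<notin> S i"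
      and Sn: "S (Suc i) = insert q2' (S i)" and cn: "c (Suc i) = c i + 2"
    obtain r :: nat where r: "r \<notin> insert w V"
      using ex_new_if_finite[OF infinite_UNIV_nat, of "insert w V"] finV by blast
    define u1 where "u1 = vmain q1"
    define u2 where "u2 = vmain q1'"
    have u1V: "u1 \<in> V" and Lu1: "L u1 = q1" and nsu1: "num_successful steps u1 = 0"
      using mn q1 by (auto simp: u1_def)
    have u2V: "u2 \<in> V" and Lu2: "L u2 = q1'" and nsu2: "num_successful steps u2 = 0"
      using mn q1' by (auto simp: u2_def)
    have u1w: "u1 \<noteq> w" using u1V w by auto
    have u2w: "u2 \<noteq> w" using u2V w by auto
    have u2r: "u2 \<noteq> r" using u2V r by auto
    have wr: "w \<noteq> r" using r by auto
    define E1 where "E1 = cpE E u1 w"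
    define steps1 where "steps1 = cp u1 w L0 steps"
    have r1: "lossy_run Delta (insert w V) E1 (L0(w:=L0 u1)) steps1 (L(w:=L u1))"
      unfolding E1_def steps1_def using cp_run[OF run nsu1 u1V w symE EV] .
    have g1: "graph (insert w V) E1" unfolding E1_def using cpE_graph[OF gr u1V w] .
    have nw: "\<forall>s\<in>set steps. fst s \<noteq> w" using inV w by auto
    have nb1: "\<And>x. num_broadcasts steps1 x = (if x = w then num_broadcasts steps u1 else num_broadcasts steps x)"
      unfolding steps1_def using cp_nb[OF nw u1w] by simp
    have ns1: "\<And>x. num_successful steps1 x = (if x = w then num_successful steps u1 else num_successful steps x)"
      unfolding steps1_def using cp_ns[OF nw u1w] by simp
    have nsu2': "num_successful steps1 u2 = 0" using ns1 nsu2 u2w by simp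
    have symE1: "sym E1" and E1V: "E1 \<subseteq> insert w V \<times> insert w V" using g1 by (auto simp: graph_def)
    define E2 where "E2 = cpE E1 u2 r"
    define steps2 where "steps2 = cp u2 r (L0(w:=L0 u1)) steps1"
    define L2 where "L2 = (L(w:=L u1))(r := (L(w:=L u1)) u2)"
    define L02 where "L02 = (L0(w:=L0 u1))(r := (L0(w:=L0 u1)) u2)"
    have r2: "lossy_run Delta (insert r (insert w V)) E2 L02 steps2 L2"
      unfolding E2_def steps2_def L2_def L02_def
      using cp_run[OF r1 nsu2' _ r symE1 E1V] u2V by simp
    have g2: "graph (insert r (insert w V)) E2" unfolding E2_def using cpE_graph[OF g1 _ r] u2V by simp
    have nr: "\<forall>s\<in>set steps1. fst s \<noteq> r" using run_in_V[OF r1] r by auto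
    have nb2: "\<And>x. num_broadcasts steps2 x = (if x = r then num_broadcasts steps1 u2 else num_broadcasts steps1 x)"
      unfolding steps2_def using cp_nb[OF nr u2r] by simp
    have ns2: "\<And>x. num_successful steps2 x = (if x = r then num_successful steps1 u2 else num_successful steps1 x)"
      unfolding steps2_def using cp_ns[OF nr u2r] by simp
    define E3 where "E3 = E2 \<union> {(w,r),(r,w)}"
    have r3: "lossy_run Delta (insert r (insert w V)) E3 L02 steps2 L2"
      unfolding E3_def using add_edge[OF r2] ns2 ns1 nsu1 nsu2 wr u2w by simp
    have g3: "graph (insert r (insert w V)) E3" using g2 wr unfolding E3_def graph_def sym_def irrefl_def by auto
    have L02I: "L02 ` insert r (insert w V) \<subseteq> I" using L0I u1V u2V unfolding L02_def by auto
    have L2Q: "L2 ` insert r (insert w V) \<subseteq> Q" using run_Q[OF r3 DQ] L02I IQ by blast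
    have mmM: "mm \<in> M" using DM[OF t'] by (simp add: msg_of_def)
    define Lf where "Lf = (\<lambda>x. if x = w then q2 else if x = r then q2' else if (w,x) \<in> E3 then (SOME q'. (L2 x, Recv mm, q') \<in> Delta) else L2 x)"
    have L2w: "L2 w = q1" unfolding L2_def using Lu1 wr by simp
    have L2r: "L2 r = q1'" unfolding L2_def using Lu2 u2w by simp
    have E3V: "E3 \<subseteq> insert r (insert w V) \<times> insert r (insert w V)" using g3 by (auto simp: graph_def)
    have r4: "lossy_step Delta (insert r (insert w V)) E3 L2 w mm True Lf"
      unfolding lossy_step_def
    proof (intro conjI)
      show "w \<in> insert r (insert w V)" by simp
      show "(L2 w, Bcast mm, Lf w) \<in> Delta" using t L2w by (simp add: Lf_def)
      show "if True then \<forall>v'. v' \<noteq> w \<longrightarrow> (if (w, v') \<in> E3 then (L2 v', Recv mm, Lf v') \<in> Delta else Lf v' = L2 v')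
            else \<forall>v'. v' \<noteq> w \<longrightarrow> Lf v' = L2 v'"
      proof (simp, intro allI impI conjI)
        fix v' assume "v' \<noteq> w" "(w, v') \<in> E3"
        then have "v' \<in> insert r (insert w V)" using E3V by auto
        then have "L2 v' \<in> Q" using L2Q by auto
        then obtain q' where q': "(L2 v', Recv mm, q') \<in> Delta" using compl mmM by blast
        show "(L2 v', Recv mm, Lf v') \<in> Delta"
        proof (cases "v' = r")
          case True then show ?thesis using \<open>v' \<noteq> w\<close> t' L2r unfolding Lf_def by simp
        next
          case False
          then have "Lf v' = (SOME q'. (L2 v', Recv mm, q') \<in> Delta)"
            using \<open>v' \<noteq> w\<close> \<open>(w, v') \<in> E3\<close> unfolding Lf_def by simp
          then show ?thesis using someI[of "\<lambda>q'. (L2 v', Recv mm, q') \<in> Delta", OF q'] by simp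
        qed
      next
        fix v' assume "v' \<noteq> w" "(w, v') \<notin> E3"
        then show "Lf v' = L2 v'" unfolding Lf_def E3_def by auto
      qed
    qed
    define steps' where "steps' = steps2 @ [(w, mm, True, Lf)]"
    define vm where "vm = vmain(q2' := r)"
    have exe: "lossy_execution I Delta (insert r (insert w V)) E3 L02 steps' Lf"
      unfolding lossy_execution_def steps'_def run_append using g3 L02I r3 r4 by auto
    have vmV: "\<And>q. q \<in> S i \<Longrightarrow> vmain q \<noteq> w \<and> vmain q \<noteq> r \<and> vmain q \<in> V" using mn w r by auto
    have nb: "\<And>x. num_broadcasts steps' x = (if x = r then num_broadcasts steps u2 else if x = w then num_broadcasts steps u1 else num_broadcasts steps x) + (if x = w then 1 else 0)"
      unfolding steps'_def using nb2 nb1 u2w wr by simp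
    have ns: "\<And>x. num_successful steps' x = (if x = r then num_successful steps u2 else if x = w then num_successful steps u1 else num_successful steps x) + (if x = w then 1 else 0)"
      unfolding steps'_def using ns2 ns1 u2w wr by simp
    have E3iff: "\<And>x y. (x,y) \<in> E3 \<longleftrightarrow> (x,y) \<in> E \<or> (x = w \<and> (u1,y) \<in> E) \<or> (y = w \<and> (u1,x) \<in> E)
       \<or> (x = r \<and> (u2,y) \<in> E1) \<or> (y = r \<and> (u2,x) \<in> E1) \<or> (x = w \<and> y = r) \<or> (x = r \<and> y = w)"
      unfolding E3_def E2_def by (auto simp: cpE_iff E1_def)
    have nE: "\<And>q q'. q \<in> S i \<Longrightarrow> q' \<in> S i \<Longrightarrow> (vmain q, vmain q') \<notin> E" using mn by auto
    show ?thesis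
    proof (intro exI conjI)
      show "lossy_execution I Delta (insert r (insert w V)) E3 L02 steps' Lf" by (rule exe)
      show "card (insert r (insert w V)) = c (Suc i)" using cV cn finV w r by simp
      show "\<forall>v\<in>insert r (insert w V). num_broadcasts steps' v \<le> Suc i \<and> num_successful steps' v \<le> 1"
        using cnt u1V u2V nsu1 nsu2 wr by (auto simp: nb ns)
      show "inj_on vm (S (Suc i))" unfolding Sn vm_def using inj q2' vmV
        by (auto simp: inj_on_def)
      show "\<forall>q\<in>S (Suc i). vm q \<in> insert r (insert w V) \<and> Lf (vm q) = q \<and> num_successful steps' (vm q) = 0 \<and>
          (\<forall>q'\<in>S (Suc i). (vm q, vm q') \<notin> E3)"
      proof
        fix q assume qS: "q \<in> S (Suc i)"
        show "vm q \<in> insert r (insert w V) \<and> Lf (vm q) = q \<and> num_successful steps' (vm q) = 0 \<and>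
          (\<forall>q'\<in>S (Suc i). (vm q, vm q') \<notin> E3)"
        proof (cases "q = q2'")
          case True
          have "(r, vm q') \<notin> E3" if "q' \<in> S (Suc i)" for q'
          proof (cases "q' = q2'")
            case True then show ?thesis using g3 unfolding graph_def irrefl_def vm_def by auto
          next
            case False
            then have q'S: "q' \<in> S i" using that Sn by auto
            then show ?thesis using vmV[OF q'S] nE[OF q1' q'S] EV False wr w r vmV[OF q1'] vmV[OF q1]
              unfolding vm_def E3iff E1_def cpE_iff u2_def u1_def by auto
          qed
          then show ?thesis using True wr nsu2 unfolding vm_def Lf_def by (auto simp: ns)
        next
          case False
          then have qS': "q \<in> S i" using qS Sn by auto
          have "(vmain q, vm q') \<notin> E3" if "q' \<in> S (Suc i)" for q'
          proof (cases "q' = q2'")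
            case True then show ?thesis using vmV[OF qS'] nE[OF q1' qS'] EV wr w symE r vmV[OF q1'] vmV[OF q1]
              unfolding vm_def E3iff E1_def cpE_iff u2_def u1_def by (auto dest: symD)
          next
            case False
            then have q'S: "q' \<in> S i" using that Sn by auto
            then show ?thesis using vmV[OF q'S] vmV[OF qS'] nE[OF qS' q'S] EV False wr w r vmV[OF q1'] vmV[OF q1]
              unfolding vm_def E3iff E1_def cpE_iff u2_def u1_def by auto
          qed
          moreover have "(w, vmain q) \<notin> E3" using vmV[OF qS'] nE[OF q1 qS'] EV wr w r vmV[OF q1'] vmV[OF q1]
              unfolding E3iff E1_def cpE_iff u2_def u1_def by auto
          moreover have "L2 (vmain q) = q" using vmV[OF qS'] mn qS' unfolding L2_def by auto
          moreover have "num_successful steps (vmain q) = 0" using mn qS' by auto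
          ultimately show ?thesis using False vmV[OF qS'] unfolding vm_def Lf_def by (auto simp: ns)
        qed
      qed
    qed
  qed
qed

theorem lemma3p7:
  fixes Q I :: "'q set" and M :: "'m set" and Delta :: "('q \<times> 'm action \<times> 'q) set"
    and S :: "nat \<Rightarrow> 'q set" and c :: "nat \<Rightarrow> nat" and m i :: nat
  assumes "broadcast_protocol Q I M Delta"
    and "saturation_run I Delta S c m"
    and "i \<le> m"
  shows "\<exists>(V :: nat set) E L0 L (steps :: (nat, 'm, 'q) step list) (vmain :: 'q \<Rightarrow> nat).
           lossy_execution I Delta V E L0 steps L \<and>
           card V = c i \<and>
           (\<forall>v \<in> V. num_broadcasts steps v \<le> i \<and> num_successful steps v \<le> 1) \<and>
           inj_on vmain (S i) \<and>
           (\<forall>q \<in> S i. vmain q \<in> V \<and> L (vmain q) = q \<and> num_successful steps (vmain q) = 0 \<and>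
              (\<forall>q' \<in> S i. (vmain q, vmain q') \<notin> E))"
    using main[OF assms(1,2) assms(3)] .

end
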